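(* Let $\rho>1$, $k\ge1$ an integer and $\kappa\in(\kappa^c_\rho(k),1)$. Then there exists $(a_i)_{2\le i\le k+1}\in[0,1)^k$ such that, with $d_{k+1}=\mathcal D(a_2,\dots,a_{k+1})$, $$1<\kappa^{k+1}\frac{(1+\rho)^2}{4\rho}\sqrt{\prod_{2\le j\le k+1}(1-a_j^2)}<\kappa\frac{d_{k+1}}{2\rho}.$$
   Context: Set $r_1=r_{k+1}=1+\rho$, $r_i=2$ for $2\le i\le k$; for $(a_i)_{2\le i\le k+1}\in[0,1)^k$ let $d_1=1+\rho$ and $d_i^2=d_{i-1}^2+2r_ia_id_{i-1}+r_i^2$ ($2\le i\le k+1$, $d_i>0$), $\mathcal D(a_2,\dots,a_{k+1})=d_{k+1}$; $$\kappa^c_\rho(k)=\inf_{0\le a_2,\dots,a_{k+1}<1}\max\left(\left(\frac{4\rho}{(1+\rho)^2\sqrt{\prod_{2\le i\le k+1}(1-a_i^2)}}\right)^{\frac1{k+1}},\ \frac{2\rho}{\mathcal D(a_2,\dots,a_{k+1})}\right).$$ *)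

theory Defs
  imports Complex_Main
begin

definition rad :: "real \<Rightarrow> nat \<Rightarrow> nat \<Rightarrow> real" where
  "rad rho k i = (if i = 1 \<or> i = k + 1 then 1 + rho else 2)"

text \<open>dseq rho k a i = d_i (for i >= 1), with d_1 = 1 + rho and
  d_i = sqrt (d_{i-1}^2 + 2 r_i a_i d_{i-1} + r_i^2).  The value at index 0 is a dummy.\<close>
fun dseq :: "real \<Rightarrow> nat \<Rightarrow> (nat \<Rightarrow> real) \<Rightarrow> nat \<Rightarrow> real" where
  "dseq rho k a 0 = 1 + rho"
| "dseq rho k a (Suc 0) = 1 + rho"
| "dseq rho k a (Suc (Suc n)) =
     (let i = Suc (Suc n); p = dseq rho k a (Suc n); ri = rad rho k i
      in sqrt (p ^ 2 + 2 * ri * a i * p + ri ^ 2))"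

definition Dfun :: "real \<Rightarrow> nat \<Rightarrow> (nat \<Rightarrow> real) \<Rightarrow> real" where
  "Dfun rho k a = dseq rho k a (k + 1)"

text \<open>Admissible parameter tuples (a_i)_{2<=i<=k+1} in [0,1)^k, as functions nat => real
  (values outside {2..k+1} are irrelevant).\<close>
definition admissible :: "nat \<Rightarrow> (nat \<Rightarrow> real) \<Rightarrow> bool" where
  "admissible k a \<longleftrightarrow> (\<forall>i\<in>{2..k+1}. 0 \<le> a i \<and> a i < 1)"

definition kappa_c :: "real \<Rightarrow> nat \<Rightarrow> real" where
  "kappa_c rho k = (INF a \<in> {a. admissible k a}.
      max (root (k + 1) (4 * rho / ((1 + rho)^2 * sqrt (\<Prod>i\<in>{2..k+1}. 1 - (a i)^2))))
          (2 * rho / Dfun rho k a))"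

end

theory Submission
  imports Defs
begin

lemma dseq_cong: "(\<And>i. i \<le> m \<Longrightarrow> a i = b i) \<Longrightarrow> dseq rho k a m = dseq rho k b m"
proof (induction rho k a m rule: dseq.induct)
  case (3 rho k a n)
  then have "dseq rho k a (Suc n) = dseq rho k b (Suc n)" by simp
  moreover have "a (Suc (Suc n)) = b (Suc (Suc n))" using 3 by simp
  ultimately show ?case by (simp add: Let_def)
qed auto

lemma dseq_ge: "rho > 0 \<Longrightarrow> admissible k a \<Longrightarrow> m \<le> k + 1 \<Longrightarrow> dseq rho k a m \<ge> 1 + rho"
proof (induction rho k a m rule: dseq.induct)
  case (3 rho k a n)
  define p where "p = dseq rho k a (Suc n)"
  define ri where "ri = rad rho k (Suc (Suc n))"
  have p: "p \<ge> 1 + rho" using 3 unfolding p_def by simp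
  have ri: "ri \<ge> 0" using 3 unfolding ri_def rad_def by auto
  have ai: "a (Suc (Suc n)) \<ge> 0" using 3 unfolding admissible_def by auto
  have "(1+rho)^2 \<le> p^2" using p 3(2) by (simp add: power_mono)
  also have "p^2 \<le> p ^ 2 + 2 * ri * a (Suc (Suc n)) * p + ri ^ 2"
    using p ri ai 3(2) by (simp add: mult_nonneg_nonneg)
  finally have "sqrt ((1+rho)^2) \<le> sqrt (p ^ 2 + 2 * ri * a (Suc (Suc n)) * p + ri ^ 2)"
    using real_sqrt_le_mono by blast
  then show ?case using 3(2) by (simp add: Let_def p_def ri_def)
qed auto

theorem lemma2p10:
  fixes rho kappa :: real and k :: nat
  assumes "rho > 1" and "k \<ge> 1"
    and "kappa_c rho k < kappa" and "kappa < 1"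
  shows "\<exists>a. admissible k a \<and>
    1 < kappa ^ (k + 1) * ((1 + rho)^2 / (4 * rho)) * sqrt (\<Prod>j\<in>{2..k+1}. 1 - (a j)^2) \<and>
    kappa ^ (k + 1) * ((1 + rho)^2 / (4 * rho)) * sqrt (\<Prod>j\<in>{2..k+1}. 1 - (a j)^2)
      < kappa * (Dfun rho k a / (2 * rho))"
proof -
  have ne: "{a. admissible k a} \<noteq> {}" using admissible_def[of k "\<lambda>_. 0"] by auto
  obtain a where adm: "admissible k a" and lt: "max (root (k + 1) (4 * rho / ((1 + rho)^2 * sqrt (\<Prod>i\<in>{2..k+1}. 1 - (a i)^2))))
          (2 * rho / Dfun rho k a) < kappa"
    using cInf_lessD[OF _ assms(3)[unfolded kappa_c_def]] ne by auto
  define P where "P = (\<Prod>i\<in>{2..k+1}. 1 - (a i)^2)"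
  have fac: "\<And>i. i \<in> {2..k+1} \<Longrightarrow> 0 < 1 - (a i)^2"
  proof -
    fix i assume "i \<in> {2..k+1}"
    then have "0 \<le> a i" "a i < 1" using adm admissible_def by auto
    then have "(a i)^2 < 1" by (simp add: abs_square_less_1)
    then show "0 < 1 - (a i)^2" by simp
  qed
  have P: "P > 0" unfolding P_def using fac by (intro prod_pos) auto
  define C where "C = (1 + rho)^2 / (4 * rho)"
  have C: "C > 0" using assms(1) unfolding C_def by simp
  define D where "D = Dfun rho k a"
  have D: "D \<ge> 1 + rho" unfolding D_def Dfun_def using dseq_ge[OF _ adm, of rho "k+1"] assms(1) by simp
  define y where "y = 4 * rho / ((1 + rho)^2 * sqrt P)"
  have y: "y > 0" using assms(1) P unfolding y_def by simp
  have ry: "root (k+1) y < kappa" using lt unfolding y_def P_def by simp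
  have kpos: "kappa > 0" using ry real_root_gt_zero[of "k+1" y] y by linarith
  have "root (k+1) y ^ (k+1) < kappa ^ (k+1)"
    using ry y by (intro power_strict_mono) auto
  then have yk: "y < kappa ^ (k+1)" using y real_root_pow_pos2[of "k+1" y] by (simp del: power_Suc)
  define K where "K = kappa ^ (k+1) * C"
  have K: "K > 0" using kpos C unfolding K_def by simp
  define X0 where "X0 = K * sqrt P"
  have "K * sqrt P = kappa ^ (k+1) / y"
    using P assms(1) unfolding K_def C_def y_def by (simp add: field_simps)
  then have h1: "1 < X0" unfolding X0_def using yk y by simp
  define M where "M = kappa * (D / (2 * rho))"
  have "2 * rho / D < kappa" using lt by (simp add: D_def)
  then have h2: "1 < M" unfolding M_def using D assms(1) by (simp add: field_simps)
  show ?thesis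
  proof (cases "X0 < M")
    case True
    then show ?thesis using adm h1 unfolding X0_def M_def K_def C_def P_def D_def by auto
  next
    case False
    define c where "c = (1 + M) / 2"
    have c1: "1 < c" "c < M" "c \<le> X0" using h2 False unfolding c_def by auto
    define Q where "Q = (\<Prod>i\<in>{2..k}. 1 - (a i)^2)"
    have Q: "Q > 0" unfolding Q_def using fac by (intro prod_pos) auto
    have setsplit: "{2..k+1} = insert (k+1) {2..k}" using assms(2) by auto
    have PQ: "P = (1 - (a (k+1))^2) * Q" unfolding P_def Q_def setsplit by simp
    define w where "w = c^2 / (K^2 * Q)"
    have w0: "w > 0" using c1 K Q unfolding w_def by simp
    have "c^2 \<le> X0^2" using c1 by (intro power_mono) auto
    also have "X0^2 = K^2 * P" unfolding X0_def using P
      by (simp add: power_mult_distrib)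
    also have "\<dots> = K^2 * Q * (1 - (a (k+1))^2)" unfolding PQ by (simp add: mult_ac)
    finally have w1: "w \<le> 1 - (a (k+1))^2" unfolding w_def using K Q
      by (simp add: divide_le_eq mult_ac)
    define s where "s = sqrt (1 - w)"
    have ak: "0 \<le> a (k+1)" "a (k+1) < 1" using adm assms(2) unfolding admissible_def by auto
    have s1: "a (k+1) \<le> s" unfolding s_def
      by (rule real_le_rsqrt) (use w1 in linarith)
    have s2: "s < 1" unfolding s_def using w0 w1 by simp
    have s0: "0 \<le> s" using s1 ak by simp
    define b where "b = a(k+1 := s)"
    have admb: "admissible k b" using adm s0 s2 unfolding b_def admissible_def by auto
    have Qb: "(\<Prod>i\<in>{2..k}. 1 - (b i)^2) = Q"
      unfolding Q_def b_def by (rule prod.cong) auto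
    have Pb: "(\<Prod>i\<in>{2..k+1}. 1 - (b i)^2) = (1 - s^2) * Q"
      unfolding setsplit using Qb by (subst prod.insert) (auto simp: b_def)
    have "1 - s^2 = w" unfolding s_def using w1 ak w0
      using real_sqrt_pow2[of "1 - w"] by (smt (verit) zero_le_power2)
    then have "sqrt ((1 - s^2) * Q) = c / K" unfolding w_def using K Q c1
      by (simp add: real_sqrt_divide real_sqrt_mult)
    then have Xb: "kappa ^ (k + 1) * ((1 + rho)^2 / (4 * rho)) * sqrt (\<Prod>j\<in>{2..k+1}. 1 - (b j)^2) = c"
    proof -
      have "kappa ^ (k + 1) * ((1 + rho)^2 / (4 * rho)) = K" unfolding K_def C_def by simp
      then show ?thesis using Pb K \<open>sqrt ((1 - s^2) * Q) = c / K\<close> by simp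
    qed
    obtain n where kn: "k + 1 = Suc (Suc n)" proof
      show "k + 1 = Suc (Suc (k - 1))" using assms(2) by simp
    qed
    have pe: "dseq rho k b (Suc n) = dseq rho k a (Suc n)"
      by (rule dseq_cong) (use kn in \<open>auto simp: b_def\<close>)
    define p where "p = dseq rho k a (Suc n)"
    have p0: "p \<ge> 0" unfolding p_def using dseq_ge[OF _ adm, of rho "Suc n"] kn assms(1) by simp
    define ri where "ri = rad rho k (Suc (Suc n))"
    have ri: "ri \<ge> 0" using assms(1) unfolding ri_def rad_def by auto
    have bk: "b (Suc (Suc n)) = s" using kn unfolding b_def by (metis fun_upd_same)
    have ak': "a (Suc (Suc n)) = a (k+1)" using kn by simp
    have "p ^ 2 + 2 * ri * a (Suc (Suc n)) * p + ri ^ 2 \<le> p ^ 2 + 2 * ri * s * p + ri ^ 2"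
    proof -
      have "ri * a (Suc (Suc n)) \<le> ri * s" using s1 ri ak' by (simp add: mult_left_mono)
      then have "ri * a (Suc (Suc n)) * p \<le> ri * s * p" using p0 by (rule mult_right_mono)
      then show ?thesis by linarith
    qed
    then have "Dfun rho k a \<le> Dfun rho k b"
      unfolding Dfun_def kn using pe by (simp add: Let_def p_def ri_def bk real_sqrt_le_mono)
    then have "M \<le> kappa * (Dfun rho k b / (2 * rho))"
    proof -
      have "D / (2 * rho) \<le> Dfun rho k b / (2 * rho)" unfolding D_def
        using \<open>Dfun rho k a \<le> Dfun rho k b\<close> assms(1) by (intro divide_right_mono) auto
      then show ?thesis unfolding M_def using kpos by (intro mult_left_mono) auto
    qed
    then show ?thesis using admb Xb c1 by auto
  qed
qed

end
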